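(* Let $G$ be a digraph, let $X\subseteq V(G)$, let $r\ge1$ and let $c=\mathrm{wcol}_r(G)$. Then the number of distinct distance-$r$ vectors $D_r^-(v,X)$, $v\in V(G)$, is bounded by $((r+2)\cdot c\cdot|X|)^c$, and in particular $\nu_r^-(G,X)\le((r+2)\cdot c\cdot|X|)^c$.
   Context: For a linear order $L$ of $V(G)$, $u$ is weakly $r$-reachable from $v$ if there is a directed path of length at most $r$ from $u$ to $v$ or from $v$ to $u$ on which $u$ is the $L$-minimum; $\mathrm{WReach}_r[G,L,v]$ is the set of such $u$; $\mathrm{wcol}_r(G)=\min_L\max_{v}|\mathrm{WReach}_r[G,L,v]|$. For $A=\{a_1,\dots,a_{|A|}\}\subseteq V(G)$ (with a fixed enumeration) and $v\in V(G)$, the distance-$r$ vector $D_r^-(v,A)=(d_1,\dots,d_{|A|})$ has $d_i=\mathrm{dist}(a_i,v)$ (length of a shortest directed path from $a_i$ to $v$) if this is at most $r$, and $d_i=\infty$ otherwise. $N_r^-(v)$ is the set of vertices from which $v$ is reachable by a directed path of length at most $r$, and $\nu_r^-(G,X)=|\{N_r^-(v)\cap X : v\in V(G)\}|$. *)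

theory Defs
  imports Main "HOL-Library.Extended_Nat"
begin

definition digraph :: "'a set \<Rightarrow> ('a \<times> 'a) set \<Rightarrow> bool" where
  "digraph V E \<longleftrightarrow> finite V \<and> E \<subseteq> V \<times> V"

definition dpath :: "'a set \<Rightarrow> ('a \<times> 'a) set \<Rightarrow> 'a list \<Rightarrow> bool" where
  "dpath V E p \<longleftrightarrow> p \<noteq> [] \<and> set p \<subseteq> V \<and> distinct p \<and>
     (\<forall>i. Suc i < length p \<longrightarrow> (p ! i, p ! Suc i) \<in> E)"

definition plen :: "'a list \<Rightarrow> nat" where
  "plen p = length p - 1"

definition path_from_to :: "'a set \<Rightarrow> ('a \<times> 'a) set \<Rightarrow> 'a list \<Rightarrow> 'a \<Rightarrow> 'a \<Rightarrow> bool" where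
  "path_from_to V E p u v \<longleftrightarrow> dpath V E p \<and> hd p = u \<and> last p = v"

text \<open>Weak r-reachability w.r.t. a linear order L on V (L a relation, (x,y) \<in> L meaning x \<le>_L y).\<close>

definition WReach :: "'a set \<Rightarrow> ('a \<times> 'a) set \<Rightarrow> nat \<Rightarrow> ('a \<times> 'a) set \<Rightarrow> 'a \<Rightarrow> 'a set" where
  "WReach V E r L v = {u \<in> V. \<exists>p. (path_from_to V E p u v \<or> path_from_to V E p v u)
       \<and> plen p \<le> r \<and> (\<forall>w\<in>set p. (u, w) \<in> L)}"

definition wcol :: "'a set \<Rightarrow> ('a \<times> 'a) set \<Rightarrow> nat \<Rightarrow> nat" where
  "wcol V E r = Min {Max {card (WReach V E r L v) | v. v \<in> V} | L. linear_order_on V L}"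

definition ddist :: "'a set \<Rightarrow> ('a \<times> 'a) set \<Rightarrow> 'a \<Rightarrow> 'a \<Rightarrow> enat" where
  "ddist V E a v = (if \<exists>p. path_from_to V E p a v
      then enat (LEAST k. \<exists>p. path_from_to V E p a v \<and> plen p = k) else \<infinity>)"

text \<open>Distance-r vector D_r^-(v,A) for A given by a fixed enumeration (list) as.\<close>

definition Dvec :: "'a set \<Rightarrow> ('a \<times> 'a) set \<Rightarrow> nat \<Rightarrow> 'a \<Rightarrow> 'a list \<Rightarrow> enat list" where
  "Dvec V E r v as = map (\<lambda>a. if ddist V E a v \<le> enat r then ddist V E a v else \<infinity>) as"

definition Nin :: "'a set \<Rightarrow> ('a \<times> 'a) set \<Rightarrow> nat \<Rightarrow> 'a \<Rightarrow> 'a set" where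
  "Nin V E r v = {u \<in> V. \<exists>p. path_from_to V E p u v \<and> plen p \<le> r}"

definition nu_in :: "'a set \<Rightarrow> ('a \<times> 'a) set \<Rightarrow> nat \<Rightarrow> 'a set \<Rightarrow> nat" where
  "nu_in V E r X = card {Nin V E r v \<inter> X | v. v \<in> V}"

end

theory Submission
  imports Defs "HOL-Library.FuncSet"
begin


lemma dpath_succ: "dpath V E p \<longleftrightarrow> p \<noteq> [] \<and> set p \<subseteq> V \<and> distinct p \<and> successively (\<lambda>x y. (x,y)\<in>E) p"
  unfolding dpath_def successively_conv_nth by auto

definition walk :: "'a set \<Rightarrow> ('a \<times> 'a) set \<Rightarrow> 'a list \<Rightarrow> bool" where
  "walk V E p \<longleftrightarrow> p \<noteq> [] \<and> set p \<subseteq> V \<and> successively (\<lambda>x y. (x,y)\<in>E) p"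

lemma walk_to_path:
  "walk V E p \<Longrightarrow> \<exists>q. dpath V E q \<and> hd q = hd p \<and> last q = last p \<and> length q \<le> length p"
proof (induction "length p" arbitrary: p rule: less_induct)
  case less
  show ?case
  proof (cases "distinct p")
    case True then show ?thesis using less.prems by (auto simp: walk_def dpath_succ)
  next
    case False
    then obtain xs ys zs y where p: "p = xs@[y]@ys@[y]@zs" using not_distinct_decomp by blast
    let ?q = "xs@[y]@zs"
    have "walk V E ?q" using less.prems unfolding p walk_def
      by (auto simp: successively_append_iff successively_Cons)
    moreover have "length ?q < length p" using p by simp
    ultimately obtain q where "dpath V E q \<and> hd q = hd ?q \<and> last q = last ?q \<and> length q \<le> length ?q"
      using less.hyps by blast
    moreover have "hd ?q = hd p" "last ?q = last p" using p by (cases xs; simp)+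
    ultimately show ?thesis using \<open>length ?q < length p\<close> by auto
  qed
qed

definition RR :: "'a set \<Rightarrow> ('a \<times> 'a) set \<Rightarrow> 'a \<Rightarrow> 'a \<Rightarrow> nat \<Rightarrow> bool" where
  "RR V E a v k \<longleftrightarrow> (\<exists>p. path_from_to V E p a v \<and> plen p \<le> k)"

lemma walk_app:
  assumes "walk V E (p @ [m])" "walk V E (m # q)" shows "walk V E (p @ m # q)"
  using assms unfolding walk_def by (auto simp: successively_append_iff successively_Cons)

lemma RR_trans:
  assumes "RR V E a m k1" "RR V E m v k2" shows "RR V E a v (k1+k2)"
proof -
  obtain p where p: "path_from_to V E p a m" "plen p \<le> k1" using assms(1) unfolding RR_def by blast
  obtain q where q: "path_from_to V E q m v" "plen q \<le> k2" using assms(2) unfolding RR_def by blast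
  have pn: "p \<noteq> []" and qn: "q \<noteq> []" using p q by (auto simp: path_from_to_def dpath_def)
  have hq: "hd q = m" and lp: "last p = m" using p q by (auto simp: path_from_to_def)
  have lq: "q = m # tl q" using hq qn by (metis list.collapse)
  obtain pb where lp2: "p = pb @ [m]" using lp pn by (metis append_butlast_last_id)
  have w1: "walk V E (pb @ [m])" using p unfolding lp2 walk_def path_from_to_def dpath_succ by blast
  have w2: "walk V E (m # tl q)" using q lq unfolding walk_def path_from_to_def dpath_succ by (metis lq)
  have "walk V E (pb @ m # tl q)" using walk_app[OF w1 w2] .
  then obtain r where r: "dpath V E r" "hd r = hd (pb @ m # tl q)" "last r = last (pb @ m # tl q)"
      "length r \<le> length (pb @ m # tl q)" using walk_to_path by blast
  have "hd (pb @ m # tl q) = a" using p unfolding lp2 path_from_to_def by (cases pb) auto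
  moreover have "last (pb @ m # tl q) = v" using q lq unfolding path_from_to_def by (cases "tl q") auto
  moreover have "plen r \<le> k1 + k2" using r(4) p(2) q(2) unfolding lp2 plen_def by simp
  ultimately show ?thesis using r unfolding RR_def path_from_to_def by (intro exI[of _ r]) simp
qed

lemma ddist_le: "ddist V E a v \<le> enat k \<longleftrightarrow> RR V E a v k"
proof
  assume h: "ddist V E a v \<le> enat k"
  have ex: "\<exists>p. path_from_to V E p a v"
  proof (rule ccontr)
    assume "\<not> ?thesis" then have "ddist V E a v = \<infinity>" unfolding ddist_def by simp
    then show False using h by simp
  qed
  let ?P = "\<lambda>k. \<exists>p. path_from_to V E p a v \<and> plen p = k"
  have dd: "ddist V E a v = enat (Least ?P)" using ex unfolding ddist_def by simp
  from ex obtain p where "path_from_to V E p a v" by blast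
  hence "\<exists>k. ?P k" by blast
  hence "?P (Least ?P)" by (rule LeastI_ex)
  then obtain q where q: "path_from_to V E q a v" "plen q = Least ?P" by blast
  have "Least ?P \<le> k" using h dd by simp
  then show "RR V E a v k" unfolding RR_def using q by auto
next
  assume "RR V E a v k"
  then obtain p where p: "path_from_to V E p a v" "plen p \<le> k" unfolding RR_def by blast
  let ?P = "\<lambda>k. \<exists>p. path_from_to V E p a v \<and> plen p = k"
  have dd: "ddist V E a v = enat (Least ?P)" using p unfolding ddist_def by auto
  have "Least ?P \<le> plen p" using p by (intro Least_le) blast
  then show "ddist V E a v \<le> enat k" using p dd by simp
qed

lemma ddist_shortest: assumes "ddist V E a v = enat d"
  shows "\<exists>p. path_from_to V E p a v \<and> plen p = d \<and> (\<forall>q. path_from_to V E q a v \<longrightarrow> d \<le> plen q)"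
proof -
  have ex: "\<exists>p. path_from_to V E p a v"
  proof (rule ccontr)
    assume "\<not> ?thesis" then have "ddist V E a v = \<infinity>" unfolding ddist_def by simp
    then show False using assms by simp
  qed
  let ?P = "\<lambda>k. \<exists>p. path_from_to V E p a v \<and> plen p = k"
  have dd: "d = Least ?P" using ex assms unfolding ddist_def by simp
  from ex obtain p where "path_from_to V E p a v" by blast
  hence "\<exists>k. ?P k" by blast
  hence "?P (Least ?P)" by (rule LeastI_ex)
  moreover have "\<forall>q. path_from_to V E q a v \<longrightarrow> Least ?P \<le> plen q" by (auto intro: Least_le)
  ultimately show ?thesis unfolding dd by blast
qed



lemma lin_min:
  assumes lin: "linear_order_on V L" and "finite S" "S \<noteq> {}" "S \<subseteq> V"
  shows "\<exists>m\<in>S. \<forall>w\<in>S. (m,w)\<in>L"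
  using assms(2,3,4)
proof (induction S rule: finite_ne_induct)
  case (singleton x)
  then show ?case using lin by (auto simp: linear_order_on_def partial_order_on_def preorder_on_def refl_on_def)
next
  case (insert x F)
  then obtain m where m: "m \<in> F" "\<forall>w\<in>F. (m,w)\<in>L" by auto
  have tr: "trans L" and rf: "refl_on V L" and to: "total_on V L"
    using lin by (auto simp: linear_order_on_def partial_order_on_def preorder_on_def)
  have xV: "x \<in> V" and mV: "m \<in> V" using insert m by auto
  show ?case
  proof (cases "(x,m) \<in> L")
    case True
    have "\<forall>w\<in>insert x F. (x,w)\<in>L"
      using True m tr rf xV by (auto simp: refl_on_def dest: transD)
    then show ?thesis by blast
  next
    case False
    hence "x \<noteq> m" using rf mV by (auto simp: refl_on_def)
    hence "(m,x) \<in> L" using False to xV mV by (auto simp: total_on_def)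
    then show ?thesis using m by blast
  qed
qed

lemma succ_take_drop:
  assumes "successively P xs" shows "successively P (take n xs)" "successively P (drop n xs)"
proof -
  have "successively P (take n xs @ drop n xs)" using assms by simp
  then show "successively P (take n xs)" "successively P (drop n xs)"
    unfolding successively_append_iff by auto
qed

lemma key:
  assumes lin: "linear_order_on V L" and dd: "ddist V E a v = enat d" and dr: "d \<le> r"
  shows "\<exists>m i e. m \<in> WReach V E r L a \<and> m \<in> WReach V E r L v \<and> RR V E a m i
     \<and> ddist V E m v = enat e \<and> i + e \<le> d"
proof -
  obtain p where p: "path_from_to V E p a v" "plen p = d" using ddist_shortest[OF dd] by blast
  have pn: "p \<noteq> []" and pV: "set p \<subseteq> V" and pd: "distinct p"
    and ps: "successively (\<lambda>x y. (x,y)\<in>E) p" and hp: "hd p = a" and lp: "last p = v"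
    using p unfolding path_from_to_def dpath_succ by auto
  obtain m where m: "m \<in> set p" "\<forall>w\<in>set p. (m,w)\<in>L" using lin_min[OF lin _ _ pV] pn by auto
  obtain i where i: "i < length p" "p ! i = m" using m(1) by (auto simp: in_set_conv_nth)
  have mV: "m \<in> V" using m pV by auto
  define p1 where "p1 = take (Suc i) p"
  define p2 where "p2 = drop i p"
  have p1n: "p1 \<noteq> []" using pn unfolding p1_def by simp
  have p2n: "p2 \<noteq> []" using i unfolding p2_def by simp
  have s1: "set p1 \<subseteq> set p" unfolding p1_def by (rule set_take_subset)
  have s2: "set p2 \<subseteq> set p" unfolding p2_def by (rule set_drop_subset)
  have P1: "path_from_to V E p1 a m"
    unfolding path_from_to_def dpath_succ
  proof (intro conjI)
    show "p1 \<noteq> []" by fact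
    show "set p1 \<subseteq> V" using s1 pV by auto
    show "distinct p1" using pd unfolding p1_def by simp
    show "successively (\<lambda>x y. (x, y) \<in> E) p1" using succ_take_drop(1)[OF ps] unfolding p1_def .
    show "hd p1 = a" using pn hp unfolding p1_def by (cases p) auto
    show "last p1 = m" using i unfolding p1_def by (simp add: take_Suc_conv_app_nth)
  qed
  have P2: "path_from_to V E p2 m v"
    unfolding path_from_to_def dpath_succ
  proof (intro conjI)
    show "p2 \<noteq> []" by fact
    show "set p2 \<subseteq> V" using s2 pV by auto
    show "distinct p2" using pd unfolding p2_def by simp
    show "successively (\<lambda>x y. (x, y) \<in> E) p2" using succ_take_drop(2)[OF ps] unfolding p2_def .
    show "hd p2 = m" using i unfolding p2_def by (simp add: hd_drop_conv_nth)
    show "last p2 = v" using i lp unfolding p2_def by simp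
  qed
  have l1: "plen p1 = i" using i unfolding p1_def plen_def by simp
  have l2: "plen p2 = d - i" using i p(2) unfolding p2_def plen_def by simp
  have id: "i \<le> d" using i p(2) unfolding plen_def by simp
  have W1: "m \<in> WReach V E r L a" unfolding WReach_def
    using mV P1 l1 id dr s1 m(2) by (intro CollectI conjI exI[of _ p1]) auto
  have W2: "m \<in> WReach V E r L v" unfolding WReach_def
    using mV P2 l2 dr s2 m(2) by (intro CollectI conjI exI[of _ p2]) auto
  have R1: "RR V E a m i" unfolding RR_def using P1 l1 by auto
  have "RR V E m v (d - i)" unfolding RR_def using P2 l2 by auto
  hence "ddist V E m v \<le> enat (d - i)" by (rule ddist_le[THEN iffD2])
  then obtain e where e: "ddist V E m v = enat e" "e \<le> d - i"
    by (cases "ddist V E m v") auto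
  show ?thesis using W1 W2 R1 e id by (intro exI[of _ m] exI[of _ i] exI[of _ e]) auto
qed



lemma count_subsets:
  assumes fT: "finite T"
  shows "card {S. S \<subseteq> T \<and> card S \<le> c} \<le> (card T + 1) ^ c"
proof -
  define B where "B = insert None (Some ` T)"
  define F where "F = PiE {..<c} (\<lambda>_. B)"
  define h where "h = (\<lambda>f::nat \<Rightarrow> 'a option. {x. Some x \<in> f ` {..<c}})"
  have cB: "card B = card T + 1" unfolding B_def using fT
    by (simp add: card_image)
  have fB: "finite B" unfolding B_def using fT by simp
  have cF: "card F = (card T + 1) ^ c" unfolding F_def using cB
    by (simp add: card_PiE)
  have fF: "finite F" unfolding F_def using fB by (simp add: finite_PiE)
  have sub: "{S. S \<subseteq> T \<and> card S \<le> c} \<subseteq> h ` F"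
  proof
    fix S assume "S \<in> {S. S \<subseteq> T \<and> card S \<le> c}"
    hence ST: "S \<subseteq> T" and cS: "card S \<le> c" by auto
    have fS: "finite S" using ST fT by (rule finite_subset)
    obtain g where g: "bij_betw g {0..<card S} S" using ex_bij_betw_nat_finite[OF fS] by blast
    define f where "f = restrict (\<lambda>i. if i < card S then Some (g i) else None) {..<c}"
    have "\<forall>i\<in>{..<c}. (if i < card S then Some (g i) else None) \<in> B"
      using bij_betw_apply[OF g] ST by (auto simp: B_def)
    hence "f \<in> F" unfolding F_def f_def by (simp add: restrict_PiE_iff)
    moreover have "h f = S"
    proof
      show "h f \<subseteq> S"
      proof
        fix x assume "x \<in> h f"
        then obtain i where i: "i < c" "Some x = f i" unfolding h_def by auto
        hence "i < card S \<and> x = g i" unfolding f_def by (auto split: if_splits)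
        then show "x \<in> S" using bij_betw_apply[OF g] by auto
      qed
      show "S \<subseteq> h f"
      proof
        fix x assume "x \<in> S"
        hence "x \<in> g ` {0..<card S}" using g by (simp add: bij_betw_def)
        then obtain i where "i < card S" "g i = x" by auto
        then show "x \<in> h f" unfolding h_def f_def using cS by (auto intro!: image_eqI[of _ _ i])
      qed
    qed
    ultimately show "S \<in> h ` F" by blast
  qed
  have "card {S. S \<subseteq> T \<and> card S \<le> c} \<le> card (h ` F)"
    using sub fF by (intro card_mono) auto
  also have "\<dots> \<le> card F" using fF by (rule card_image_le)
  finally show ?thesis using cF by simp
qed

lemma exists_lin: "\<exists>L. linear_order_on V L"
proof -
  obtain r0 :: "'a rel" where w: "Well_order r0" "Field r0 = UNIV" using well_ordering[where 'a='a] by (elim exE conjE)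
  have l: "linear_order_on UNIV r0" using w(1) unfolding w(2) well_order_on_def by (elim conjE)
  have a: "refl_on UNIV r0" "trans r0" "antisym r0" "total_on UNIV r0"
    using l unfolding linear_order_on_def partial_order_on_def preorder_on_def by auto
  let ?L = "r0 \<inter> V \<times> V"
  have "refl_on V ?L" using a(1) by (simp add: refl_on_def)
  moreover have "total_on V ?L" using a(4) by (simp add: total_on_def)
  moreover have "trans ?L" using a(2) unfolding trans_def by blast
  moreover have "antisym ?L" using a(3) unfolding antisym_def by blast
  ultimately have "linear_order_on V ?L"
    unfolding linear_order_on_def partial_order_on_def preorder_on_def by simp
  then show ?thesis by (rule exI)
qed


theorem mainTheorem14:
  fixes V :: "'a set" and E :: "('a \<times> 'a) set" and xs :: "'a list" and r c :: nat
  assumes "digraph V E"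
    and "set xs \<subseteq> V" and "distinct xs" and "xs \<noteq> []"
    and "r \<ge> 1"
    and "c = wcol V E r"
  shows "card {Dvec V E r v xs | v. v \<in> V} \<le> ((r + 2) * c * length xs) ^ c
    \<and> nu_in V E r (set xs) \<le> ((r + 2) * c * card (set xs)) ^ c"
proof -
  have fV: "finite V" using assms(1) unfolding digraph_def by simp
  have Wsub: "WReach V E r L v \<subseteq> V" for L v unfolding WReach_def by auto
  have fW: "finite (WReach V E r L v)" for L v using Wsub fV by (rule finite_subset)
  have cWV: "card (WReach V E r L v) \<le> card V" for L v using Wsub fV by (rule card_mono[rotated])
  have img: "{card (WReach V E r L v) | v. v \<in> V} = (\<lambda>v. card (WReach V E r L v)) ` V" for L
    by auto
  define M where "M = {Max {card (WReach V E r L v) | v. v \<in> V} | L. linear_order_on V L}"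
  have cM: "c = Min M" using assms(6) unfolding wcol_def M_def by simp
  obtain a0 where a0: "a0 \<in> set xs" using assms(4) by (cases xs) auto
  have a0V: "a0 \<in> V" using a0 assms(2) by auto
  have Mb: "M \<subseteq> {..card V}"
  proof
    fix x assume "x \<in> M"
    then obtain L where x: "x = Max ((\<lambda>v. card (WReach V E r L v)) ` V)" unfolding M_def img by auto
    have "Max ((\<lambda>v. card (WReach V E r L v)) ` V) \<le> card V"
      using fV a0V cWV by (intro Max.boundedI) auto
    then show "x \<in> {..card V}" using x by simp
  qed
  have fM: "finite M" using Mb by (rule finite_subset) simp
  obtain L0 where "linear_order_on V L0" using exists_lin by blast
  hence Mne: "M \<noteq> {}" unfolding M_def by blast
  have "c \<in> M" using cM Min_in[OF fM Mne] by simp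
  then obtain L where lin: "linear_order_on V L"
    and cL: "c = Max ((\<lambda>v. card (WReach V E r L v)) ` V)" unfolding M_def img by auto
  have Wle: "card (WReach V E r L v) \<le> c" if "v \<in> V" for v
    unfolding cL using fV that by (intro Max_ge) auto
  have rfl: "refl_on V L" using lin unfolding linear_order_on_def partial_order_on_def preorder_on_def by simp
  have selfW: "v \<in> WReach V E r L v" if "v \<in> V" for v
  proof -
    have "path_from_to V E [v] v v" using that by (simp add: path_from_to_def dpath_def)
    moreover have "plen [v] \<le> r" by (simp add: plen_def)
    moreover have "\<forall>w\<in>set [v]. (v, w) \<in> L" using rfl that by (simp add: refl_on_def)
    ultimately show ?thesis unfolding WReach_def using that by blast
  qed
  have c1: "1 \<le> c"
  proof -
    have "WReach V E r L a0 \<noteq> {}" using selfW[OF a0V] by auto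
    hence "1 \<le> card (WReach V E r L a0)" using fW by (simp add: Suc_le_eq card_gt_0_iff)
    then show ?thesis using Wle[OF a0V] by simp
  qed
  define Y where "Y = (\<Union>a\<in>set xs. WReach V E r L a)"
  have fY: "finite Y" unfolding Y_def using fW by simp
  have "card Y \<le> (\<Sum>a\<in>set xs. card (WReach V E r L a))" unfolding Y_def by (rule card_UN_le) simp
  also have "\<dots> \<le> card (set xs) * c" using sum_bounded_above[of "set xs" "\<lambda>a. card (WReach V E r L a)" c] Wle assms(2) by auto
  also have "\<dots> \<le> length xs * c" by (simp add: card_length)
  finally have cY: "card Y \<le> length xs * c" .
  define Prof where "Prof v = {(m,e). m \<in> Y \<and> m \<in> WReach V E r L v \<and> e \<le> r \<and> ddist V E m v = enat e}" for v
  define T where "T = Y \<times> {..r}"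
  have fT: "finite T" unfolding T_def using fY by simp
  have cT: "card T = card Y * (r + 1)" unfolding T_def using fY by (simp add: card_cartesian_product)
  have ProfT: "Prof v \<subseteq> T" for v unfolding Prof_def T_def by auto
  have ProfC: "card (Prof v) \<le> c" if "v \<in> V" for v
  proof -
    have "Prof v \<subseteq> (\<lambda>m. (m, the_enat (ddist V E m v))) ` WReach V E r L v"
      unfolding Prof_def by force
    hence "card (Prof v) \<le> card ((\<lambda>m. (m, the_enat (ddist V E m v))) ` WReach V E r L v)"
      using fW by (intro card_mono) auto
    also have "\<dots> \<le> card (WReach V E r L v)" using fW by (rule card_image_le)
    finally show ?thesis using Wle[OF that] by simp
  qed
  have transfer: "ddist V E a u \<le> enat k"
    if a: "a \<in> set xs" and eq: "Prof u = Prof v" and h: "ddist V E a v \<le> enat k" and kr: "k \<le> r"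
    for u v a k
  proof -
    obtain d where d: "ddist V E a v = enat d" "d \<le> k" using h by (cases "ddist V E a v") auto
    obtain m i e where m: "m \<in> WReach V E r L a" "m \<in> WReach V E r L v" "RR V E a m i"
      "ddist V E m v = enat e" "i + e \<le> d"
      using key[OF lin d(1), of r] d(2) kr by auto
    have "(m, e) \<in> Prof v" unfolding Prof_def Y_def using m a d(2) kr by auto
    hence "(m, e) \<in> Prof u" using eq by simp
    hence "ddist V E m u = enat e" unfolding Prof_def by simp
    hence "RR V E m u e" using ddist_le[of V E m u e] by simp
    hence "RR V E a u (i + e)" by (rule RR_trans[OF m(3)])
    hence "ddist V E a u \<le> enat (i + e)" by (rule ddist_le[THEN iffD2])
    also have "\<dots> \<le> enat k" using m(5) d(2) by simp
    finally show ?thesis .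
  qed
  have entry: "(if ddist V E a v \<le> enat r then ddist V E a v else \<infinity>)
      = (if ddist V E a u \<le> enat r then ddist V E a u else \<infinity>)"
    if eq: "Prof u = Prof v" and a: "a \<in> set xs" for u v a
  proof (cases "ddist V E a v \<le> enat r")
    case True
    then obtain d where d: "ddist V E a v = enat d" "d \<le> r" by (cases "ddist V E a v") auto
    have "ddist V E a u \<le> enat d" using transfer[OF a eq] d by simp
    then obtain d' where d': "ddist V E a u = enat d'" "d' \<le> d" by (cases "ddist V E a u") auto
    have "ddist V E a v \<le> enat d'" using transfer[OF a eq[symmetric]] d' d by simp
    hence "d = d'" using d d' by simp
    then show ?thesis using d d' by simp
  next
    case False
    have "\<not> ddist V E a u \<le> enat r"
    proof
      assume "ddist V E a u \<le> enat r"
      hence "ddist V E a v \<le> enat r" using transfer[OF a eq[symmetric]] by simp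
      then show False using False by simp
    qed
    then show ?thesis using False by simp
  qed
  have DvecEq: "Dvec V E r u xs = Dvec V E r v xs" if "Prof u = Prof v" for u v
    unfolding Dvec_def using entry[OF that[symmetric]] by (intro map_cong) auto
  define g where "g S = Dvec V E r (SOME v. v \<in> V \<and> Prof v = S) xs" for S
  have DI: "{Dvec V E r v xs | v. v \<in> V} \<subseteq> g ` (Prof ` V)"
  proof
    fix x assume "x \<in> {Dvec V E r v xs | v. v \<in> V}"
    then obtain v where v: "v \<in> V" "x = Dvec V E r v xs" by auto
    have "\<exists>w. w \<in> V \<and> Prof w = Prof v" using v by blast
    hence w: "(SOME w. w \<in> V \<and> Prof w = Prof v) \<in> V \<and> Prof (SOME w. w \<in> V \<and> Prof w = Prof v) = Prof v"
      by (rule someI_ex)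
    have "g (Prof v) = x" unfolding g_def v(2) using DvecEq w by blast
    then show "x \<in> g ` (Prof ` V)" using v by blast
  qed
  have PS: "Prof ` V \<subseteq> {S. S \<subseteq> T \<and> card S \<le> c}" using ProfT ProfC by auto
  have fS: "finite {S. S \<subseteq> T \<and> card S \<le> c}" using fT by simp
  have "card {Dvec V E r v xs | v. v \<in> V} \<le> card (g ` (Prof ` V))"
    using DI fV by (intro card_mono) auto
  also have "\<dots> \<le> card (Prof ` V)" using fV by (intro card_image_le) simp
  also have "\<dots> \<le> card {S. S \<subseteq> T \<and> card S \<le> c}" using PS fS by (rule card_mono[rotated])
  also have "\<dots> \<le> (card T + 1) ^ c" using fT by (rule count_subsets)
  also have "\<dots> \<le> ((r + 2) * c * length xs) ^ c"
  proof (rule power_mono)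
    define N where "N = length xs * c"
    have N1: "1 \<le> N" unfolding N_def using c1 assms(4) by (simp add: Suc_le_eq)
    have "card Y * (r + 1) \<le> N * (r + 1)" using cY unfolding N_def by (rule mult_le_mono1)
    hence "card T + 1 \<le> N * (r + 1) + N" using cT N1 by simp
    also have "\<dots> = (r + 2) * c * length xs" unfolding N_def by (simp add: algebra_simps)
    finally show "card T + 1 \<le> (r + 2) * c * length xs" .
  qed simp
  finally have part1: "card {Dvec V E r v xs | v. v \<in> V} \<le> ((r + 2) * c * length xs) ^ c" .
  define F where "F ds = {xs ! i | i. i < length xs \<and> ds ! i \<noteq> \<infinity>}" for ds :: "enat list"
  have NF: "Nin V E r v \<inter> set xs = F (Dvec V E r v xs)" for v
  proof -
    have "x \<in> Nin V E r v \<longleftrightarrow> x \<in> V \<and> ddist V E x v \<le> enat r" for x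
      unfolding Nin_def using ddist_le[of V E x v r] unfolding RR_def by auto
    moreover have "(if ddist V E x v \<le> enat r then ddist V E x v else \<infinity>) \<noteq> \<infinity>
        \<longleftrightarrow> ddist V E x v \<le> enat r" for x
      by (cases "ddist V E x v") auto
    ultimately have D: "Dvec V E r v xs ! i \<noteq> \<infinity> \<longleftrightarrow> ddist V E (xs ! i) v \<le> enat r"
      and N: "x \<in> Nin V E r v \<longleftrightarrow> x \<in> V \<and> ddist V E x v \<le> enat r"
      if "i < length xs" for i x using that unfolding Dvec_def by auto
    show ?thesis
    proof (rule set_eqI, rule iffI)
      fix x assume x: "x \<in> Nin V E r v \<inter> set xs"
      then obtain i where i: "i < length xs" "xs ! i = x" by (auto simp: in_set_conv_nth)
      have "ddist V E x v \<le> enat r" using x N[OF i(1)] by auto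
      hence "Dvec V E r v xs ! i \<noteq> \<infinity>" using D[OF i(1)] i(2) by simp
      then show "x \<in> F (Dvec V E r v xs)" unfolding F_def using i by blast
    next
      fix x assume "x \<in> F (Dvec V E r v xs)"
      then obtain i where i: "i < length xs" "x = xs ! i" "Dvec V E r v xs ! i \<noteq> \<infinity>"
        unfolding F_def by blast
      have xs: "x \<in> set xs" using i by simp
      have "ddist V E x v \<le> enat r" using D[OF i(1)] i by simp
      then show "x \<in> Nin V E r v \<inter> set xs" using N[OF i(1)] xs assms(2) by auto
    qed
  qed
  have "{Nin V E r v \<inter> set xs | v. v \<in> V} = F ` {Dvec V E r v xs | v. v \<in> V}"
    using NF by auto
  hence "nu_in V E r (set xs) \<le> card {Dvec V E r v xs | v. v \<in> V}"
    unfolding nu_in_def by (simp add: card_image_le fV)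
  hence "nu_in V E r (set xs) \<le> ((r + 2) * c * length xs) ^ c" using part1 by simp
  then show ?thesis using part1 distinct_card[OF assms(3)] by simp
qed

end
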